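(* If $K$ is a class of structures with $K\le_c PF$, then $K$ has the substructure property: no $\mathcal{A}_1\in K$ is isomorphic to a substructure of some $\mathcal{A}_2\in K$ unless $\mathcal{A}_1\cong\mathcal{A}_2$.
   Context: Conventions: every structure is for a finite relational language with universe a subset of $\omega$; a class is closed under isomorphism. $D(\mathcal{A})$ is the atomic diagram of $\mathcal{A}$. A computable transformation from $K$ to $K'$ is a c.e. set $\Phi$ of pairs $(\alpha,\varphi)$, $\alpha$ a finite subset of the atomic diagram of a finite structure in the language of $K$, $\varphi$ an atomic sentence or negation of one in the language of $K'$, such that for every $\mathcal{A}\in K$, $\{\varphi:(\exists\alpha\subseteq D(\mathcal{A}))(\alpha,\varphi)\in\Phi\}=D(\mathcal{B})$ for some $\mathcal{B}\in K'$. A computable embedding is a computable transformation with $\mathcal{A}\cong\mathcal{A}'\iff\Phi(\mathcal{A})\cong\Phi(\mathcal{A}')$; $K\le_c K'$ means one exists. $PF$ is the class of finite prime fields (in a relational language). *)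

theory Defs
  imports Main "HOL-Library.Nat_Bijection" "HOL-Computational_Algebra.Primes"
begin

datatype recf = Zf | Sf | Proj nat | Comp recf "recf list" | Prec recf recf | Mn recf

inductive eval :: "recf \<Rightarrow> nat list \<Rightarrow> nat \<Rightarrow> bool" where
  ev_Z: "eval Zf xs 0"
| ev_S: "eval Sf (x # xs) (Suc x)"
| ev_Proj: "i < length xs \<Longrightarrow> eval (Proj i) xs (xs ! i)"
| ev_Comp: "list_all2 (\<lambda>g y. eval g xs y) gs ys \<Longrightarrow> eval f ys z \<Longrightarrow> eval (Comp f gs) xs z"
| ev_Prec0: "eval f xs z \<Longrightarrow> eval (Prec f g) (0 # xs) z"
| ev_PrecS: "eval (Prec f g) (n # xs) y \<Longrightarrow> eval g (y # n # xs) z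
              \<Longrightarrow> eval (Prec f g) (Suc n # xs) z"
| ev_Mn: "eval f (n # xs) 0 \<Longrightarrow> (\<forall>m<n. \<exists>y. y \<noteq> 0 \<and> eval f (m # xs) y)
              \<Longrightarrow> eval (Mn f) xs n"

definition ce :: "nat set \<Rightarrow> bool" where
  "ce A \<longleftrightarrow> (\<exists>f. A = {x. \<exists>y. eval f [x] y})"

text \<open>A finite relational language is a list of arities; relation symbol i (i < length L)
  has arity L ! i.\<close>

type_synonym lang = "nat list"
type_synonym struc = "nat set \<times> (nat \<Rightarrow> nat list \<Rightarrow> bool)"

definition is_structure :: "lang \<Rightarrow> struc \<Rightarrow> bool" where
  "is_structure L A \<longleftrightarrow>
     (\<forall>i xs. snd A i xs \<longrightarrow> i < length L \<and> length xs = L ! i \<and> set xs \<subseteq> fst A)"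

definition iso :: "lang \<Rightarrow> struc \<Rightarrow> struc \<Rightarrow> bool" where
  "iso L A B \<longleftrightarrow> (\<exists>f. bij_betw f (fst A) (fst B) \<and>
     (\<forall>i < length L. \<forall>xs. length xs = L ! i \<and> set xs \<subseteq> fst A \<longrightarrow>
         (snd A i xs \<longleftrightarrow> snd B i (map f xs))))"

definition substructure :: "lang \<Rightarrow> struc \<Rightarrow> struc \<Rightarrow> bool" where
  "substructure L A B \<longleftrightarrow> is_structure L A \<and> fst A \<subseteq> fst B \<and>
     (\<forall>i xs. set xs \<subseteq> fst A \<longrightarrow> (snd A i xs \<longleftrightarrow> snd B i xs))"

definition is_class :: "lang \<Rightarrow> struc set \<Rightarrow> bool" where
  "is_class L K \<longleftrightarrow> K \<subseteq> {A. is_structure L A} \<and>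
     (\<forall>A\<in>K. \<forall>B. is_structure L B \<longrightarrow> iso L A B \<longrightarrow> B \<in> K)"

text \<open>Atomic sentences, with constants for natural numbers: R_i(xs) or n = m.
  A literal is (True, a) for a and (False, a) for the negation of a.\<close>
datatype atom = Rel nat "nat list" | Eq nat nat

type_synonym literal = "bool \<times> atom"

fun atom_consts :: "atom \<Rightarrow> nat set" where
  "atom_consts (Rel i xs) = set xs"
| "atom_consts (Eq n m) = {n, m}"

fun wf_atom :: "lang \<Rightarrow> atom \<Rightarrow> bool" where
  "wf_atom L (Rel i xs) \<longleftrightarrow> i < length L \<and> length xs = L ! i"
| "wf_atom L (Eq n m) \<longleftrightarrow> True"

fun holds :: "struc \<Rightarrow> atom \<Rightarrow> bool" where
  "holds A (Rel i xs) \<longleftrightarrow> snd A i xs"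
| "holds A (Eq n m) \<longleftrightarrow> n = m"

definition diag :: "lang \<Rightarrow> struc \<Rightarrow> literal set" where
  "diag L A = {(b, a). wf_atom L a \<and> atom_consts a \<subseteq> fst A \<and> b = holds A a}"

fun code_atom :: "atom \<Rightarrow> nat" where
  "code_atom (Rel i xs) = 2 * prod_encode (i, list_encode xs)"
| "code_atom (Eq n m) = 2 * prod_encode (n, m) + 1"

definition code_lit :: "literal \<Rightarrow> nat" where
  "code_lit l = prod_encode (if fst l then 1 else 0, code_atom (snd l))"

definition code_pair :: "literal set \<times> literal \<Rightarrow> nat" where
  "code_pair p = prod_encode (set_encode (code_lit ` fst p), code_lit (snd p))"

definition transform_image :: "lang \<Rightarrow> (literal set \<times> literal) set \<Rightarrow> struc \<Rightarrow> literal set" where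
  "transform_image L \<Phi> A = {\<phi>. \<exists>\<alpha>. \<alpha> \<subseteq> diag L A \<and> (\<alpha>, \<phi>) \<in> \<Phi>}"

definition computable_transformation ::
  "lang \<Rightarrow> struc set \<Rightarrow> lang \<Rightarrow> struc set \<Rightarrow> (literal set \<times> literal) set \<Rightarrow> bool" where
  "computable_transformation L K L' K' \<Phi> \<longleftrightarrow>
     ce (code_pair ` \<Phi>) \<and>
     (\<forall>(\<alpha>, \<phi>) \<in> \<Phi>. finite \<alpha> \<and>
        (\<exists>C. is_structure L C \<and> finite (fst C) \<and> \<alpha> \<subseteq> diag L C) \<and> wf_atom L' (snd \<phi>)) \<and>
     (\<forall>A\<in>K. \<exists>B\<in>K'. transform_image L \<Phi> A = diag L' B)"

definition computable_embedding ::
  "lang \<Rightarrow> struc set \<Rightarrow> lang \<Rightarrow> struc set \<Rightarrow> (literal set \<times> literal) set \<Rightarrow> bool" where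
  "computable_embedding L K L' K' \<Phi> \<longleftrightarrow>
     computable_transformation L K L' K' \<Phi> \<and>
     (\<forall>A\<in>K. \<forall>A'\<in>K. \<forall>B B'. is_structure L' B \<longrightarrow> is_structure L' B' \<longrightarrow>
        transform_image L \<Phi> A = diag L' B \<longrightarrow> transform_image L \<Phi> A' = diag L' B' \<longrightarrow>
        (iso L A A' \<longleftrightarrow> iso L' B B'))"

definition leq_c :: "lang \<Rightarrow> struc set \<Rightarrow> lang \<Rightarrow> struc set \<Rightarrow> bool" where
  "leq_c L K L' K' \<longleftrightarrow> (\<exists>\<Phi>. computable_embedding L K L' K' \<Phi>)"

text \<open>Language of fields: symbol 0 = ternary graph of addition, symbol 1 = ternary graph
  of multiplication.\<close>
definition field_lang :: lang where
  "field_lang = [3, 3]"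

definition Zmod_struc :: "nat \<Rightarrow> struc" where
  "Zmod_struc p = ({0..<p}, (\<lambda>i xs. length xs = 3 \<and> set xs \<subseteq> {0..<p} \<and>
      ((i = 0 \<and> (xs ! 0 + xs ! 1) mod p = xs ! 2) \<or>
       (i = 1 \<and> (xs ! 0 * xs ! 1) mod p = xs ! 2))))"

definition PF :: "struc set" where
  "PF = {A. is_structure field_lang A \<and> (\<exists>p. prime p \<and> iso field_lang (Zmod_struc p) A)}"

end

theory Submission
  imports Defs "HOL-Number_Theory.Cong"
begin

lemma add_closed_all:
  fixes q s :: nat and T :: "nat set"
  assumes q: "prime q" and s: "s \<in> T" "0 < s" "s < q"
    and cl: "\<And>a b. a \<in> T \<Longrightarrow> b \<in> T \<Longrightarrow> (a + b) mod q \<in> T"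
    and t: "t < q"
  shows "t \<in> T"
proof -
  have mult: "(Suc k * s) mod q \<in> T" for k
  proof (induction k)
    case 0 then show ?case using s by simp
  next
    case (Suc k)
    have "((Suc k * s) mod q + s) mod q \<in> T" using cl[OF Suc s(1)] .
    moreover have "((Suc k * s) mod q + s) mod q = (Suc (Suc k) * s) mod q"
      by (simp add: mod_add_right_eq add.commute)
    ultimately show ?case by simp
  qed
  have "coprime s q"
    using q s by (metis coprime_commute nat_dvd_not_less prime_imp_coprime)
  then obtain k where "[s * k = t] (mod q)" using cong_solve_dvd_nat[of s q t] by auto
  then have "(s * k) mod q = t" using t by (simp add: cong_def)
  moreover have "(Suc (k + q - 1) * s) mod q = (s*k) mod q"
    using q prime_gt_0_nat[OF q]
    by (simp add: algebra_simps)
  ultimately show ?thesis using mult[of "k + q - 1"] by simp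
qed

lemma iso_trans:
  assumes "iso L A B" "iso L B C" shows "iso L A C"
proof -
  obtain f where f: "bij_betw f (fst A) (fst B)"
    "\<forall>i < length L. \<forall>xs. length xs = L ! i \<and> set xs \<subseteq> fst A \<longrightarrow> (snd A i xs \<longleftrightarrow> snd B i (map f xs))"
    using assms(1) unfolding iso_def by blast
  obtain g where g: "bij_betw g (fst B) (fst C)"
    "\<forall>i < length L. \<forall>xs. length xs = L ! i \<and> set xs \<subseteq> fst B \<longrightarrow> (snd B i xs \<longleftrightarrow> snd C i (map g xs))"
    using assms(2) unfolding iso_def by blast
  have "bij_betw (g \<circ> f) (fst A) (fst C)" using f(1) g(1) by (rule bij_betw_trans)
  moreover have "\<forall>i < length L. \<forall>xs. length xs = L ! i \<and> set xs \<subseteq> fst A \<longrightarrow> (snd A i xs \<longleftrightarrow> snd C i (map (g \<circ> f) xs))"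
  proof (intro allI impI)
    fix i xs assume i: "i < length L" and xs: "length xs = L ! i \<and> set xs \<subseteq> fst A"
    have "set (map f xs) \<subseteq> fst B" using xs f(1) by (auto simp: bij_betw_def)
    then show "snd A i xs \<longleftrightarrow> snd C i (map (g \<circ> f) xs)"
      using f(2) g(2) i xs by simp
  qed
  ultimately show ?thesis unfolding iso_def by blast
qed

lemma diag_sub:
  assumes "substructure L C A" shows "diag L C \<subseteq> diag L A"
proof
  fix l assume "l \<in> diag L C"
  then obtain b a where l: "l = (b, a)" "wf_atom L a" "atom_consts a \<subseteq> fst C" "b = holds C a"
    unfolding diag_def by auto
  have sub: "fst C \<subseteq> fst A" "\<forall>i xs. set xs \<subseteq> fst C \<longrightarrow> (snd C i xs \<longleftrightarrow> snd A i xs)"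
    using assms unfolding substructure_def by auto
  have "holds C a = holds A a" using l(3) sub(2) by (cases a) auto
  then show "l \<in> diag L A" using l sub(1) unfolding diag_def by auto
qed

lemma ti_mono:
  assumes "diag L C \<subseteq> diag L A" shows "transform_image L \<Phi> C \<subseteq> transform_image L \<Phi> A"
  using assms unfolding transform_image_def by blast

lemma pf_sub:
  assumes B1: "B1 \<in> PF" and B2: "B2 \<in> PF" and D: "diag field_lang B1 \<subseteq> diag field_lang B2"
  shows "iso field_lang B1 B2"
proof -
  obtain p f where p: "prime p" and f: "bij_betw f {0..<p} (fst B1)"
    "\<forall>i < 2. \<forall>xs. length xs = [3,3::nat] ! i \<and> set xs \<subseteq> {0..<p} \<longrightarrow>
        (snd (Zmod_struc p) i xs \<longleftrightarrow> snd B1 i (map f xs))"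
    using B1 unfolding PF_def iso_def field_lang_def by (auto simp: Zmod_struc_def)
  obtain q g where q: "prime q" and g: "bij_betw g {0..<q} (fst B2)"
    "\<forall>i < 2. \<forall>xs. length xs = [3,3::nat] ! i \<and> set xs \<subseteq> {0..<q} \<longrightarrow>
        (snd (Zmod_struc q) i xs \<longleftrightarrow> snd B2 i (map g xs))"
    using B2 unfolding PF_def iso_def field_lang_def by (auto simp: Zmod_struc_def)
  let ?U = "fst B1" and ?V = "fst B2"
  have UV: "?U \<subseteq> ?V"
  proof
    fix n assume "n \<in> ?U"
    then have "(True, Eq n n) \<in> diag field_lang B1" unfolding diag_def by auto
    then have "(True, Eq n n) \<in> diag field_lang B2" using D by blast
    then show "n \<in> ?V" unfolding diag_def by auto
  qed
  have agree: "snd B1 i xs \<longleftrightarrow> snd B2 i xs"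
    if "i < 2" "length xs = 3" "set xs \<subseteq> ?U" for i xs
  proof -
    have "wf_atom field_lang (Rel i xs)" using that
      by (auto simp: field_lang_def less_2_cases_iff)
    then have "(snd B1 i xs, Rel i xs) \<in> diag field_lang B1" using that unfolding diag_def by auto
    then have "(snd B1 i xs, Rel i xs) \<in> diag field_lang B2" using D by blast
    then show ?thesis unfolding diag_def by auto
  qed
  define T where "T = {t. t < q \<and> g t \<in> ?U}"
  have p0: "0 < p" using prime_gt_0_nat[OF p] .
  have cl: "(a + b) mod q \<in> T" if "a \<in> T" "b \<in> T" for a b
  proof -
    have a: "a < q" "g a \<in> ?U" and b: "b < q" "g b \<in> ?U" using that T_def by auto
    obtain a' where a': "a' < p" "g a = f a'" using a(2) f(1)
      by (metis atLeastLessThan_iff bij_betw_imp_surj_on imageE)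
    obtain b' where b': "b' < p" "g b = f b'" using b(2) f(1)
      by (metis atLeastLessThan_iff bij_betw_imp_surj_on imageE)
    define c' where "c' = (a' + b') mod p"
    have c': "c' < p" using p0 c'_def by simp
    have "snd (Zmod_struc p) 0 [a', b', c']" using a' b' c' c'_def
      by (simp add: Zmod_struc_def)
    then have z1: "snd B1 0 [f a', f b', f c']" using f(2) a' b' c' by auto
    have fc: "f c' \<in> ?U" using f(1) c' by (auto simp: bij_betw_def)
    then have "f c' \<in> ?V" using UV by blast
    then obtain c where c: "c < q" "f c' = g c" using g(1)
      by (metis atLeastLessThan_iff bij_betw_imp_surj_on imageE)
    have "snd B2 0 [f a', f b', f c']"
      using agree[of 0 "[f a', f b', f c']"] z1 fc a b a' b' by auto
    then have "snd B2 0 (map g [a, b, c])" using a' b' c by simp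
    then have "snd (Zmod_struc q) 0 [a, b, c]" using g(2) a b c by auto
    then have "(a + b) mod q = c" by (simp add: Zmod_struc_def)
    then show ?thesis using T_def c fc by auto
  qed
  have p1: "1 < p" using prime_gt_1_nat[OF p] .
  have "f 0 \<noteq> f 1" using f(1) p1 p0 unfolding bij_betw_def inj_on_def
    by (metis atLeastLessThan_iff zero_le zero_neq_one)
  moreover have "f 0 \<in> ?U" "f 1 \<in> ?U" using f(1) p1 p0 by (auto simp: bij_betw_def)
  ultimately obtain x where x: "x \<in> ?U" "x \<noteq> g 0" by metis
  then obtain s where s: "s < q" "g s = x" using UV g(1)
    by (metis atLeastLessThan_iff bij_betw_imp_surj_on imageE subsetD)
  have sT: "s \<in> T" "0 < s" using s x T_def by (auto intro: Nat.gr0I)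
  have allT: "t \<in> T" if "t < q" for t
    using add_closed_all[OF q sT s(1) cl that] .
  have VU: "?V \<subseteq> ?U"
  proof
    fix v assume "v \<in> ?V"
    then obtain t where "t < q" "v = g t" using g(1)
      by (metis atLeastLessThan_iff bij_betw_imp_surj_on imageE)
    then show "v \<in> ?U" using allT T_def by auto
  qed
  have "bij_betw id ?U ?V" using UV VU by (simp add: bij_betw_def)
  moreover have "\<forall>i < length field_lang. \<forall>xs. length xs = field_lang ! i \<and> set xs \<subseteq> ?U \<longrightarrow>
         (snd B1 i xs \<longleftrightarrow> snd B2 i (map id xs))"
  proof (intro allI impI)
    fix i xs assume h: "i < length field_lang" "length xs = field_lang ! i \<and> set xs \<subseteq> ?U"
    then have "i < 2" "length xs = 3" by (auto simp: field_lang_def less_Suc_eq)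
    then show "snd B1 i xs \<longleftrightarrow> snd B2 i (map id xs)" using agree h by simp
  qed
  ultimately show ?thesis unfolding iso_def by blast
qed

theorem proposition3p3:
  fixes L :: lang and K :: "struc set"
  assumes "is_class L K"
    and "leq_c L K field_lang PF"
  shows "\<forall>A1\<in>K. \<forall>A2\<in>K. (\<exists>C. substructure L C A2 \<and> iso L A1 C) \<longrightarrow> iso L A1 A2"
proof (intro ballI impI)
  fix A1 A2 assume A1: "A1 \<in> K" and A2: "A2 \<in> K" and "\<exists>C. substructure L C A2 \<and> iso L A1 C"
  then obtain C where C: "substructure L C A2" "iso L A1 C" by blast
  obtain \<Phi> where emb: "computable_embedding L K field_lang PF \<Phi>"
    using assms(2) unfolding leq_c_def by blast
  have CK: "C \<in> K" using assms(1) A1 C unfolding is_class_def substructure_def by blast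
  have tr: "\<forall>A\<in>K. \<exists>B\<in>PF. transform_image L \<Phi> A = diag field_lang B"
    using emb unfolding computable_embedding_def computable_transformation_def by blast
  obtain BC where BC: "BC \<in> PF" "transform_image L \<Phi> C = diag field_lang BC" using tr CK by blast
  obtain B2 where B2: "B2 \<in> PF" "transform_image L \<Phi> A2 = diag field_lang B2" using tr A2 by blast
  have "diag field_lang BC \<subseteq> diag field_lang B2"
    using ti_mono[OF diag_sub[OF C(1)], of \<Phi>] BC B2 by simp
  then have "iso field_lang BC B2" using pf_sub BC(1) B2(1) by blast
  moreover have "is_structure field_lang BC" "is_structure field_lang B2"
    using BC(1) B2(1) unfolding PF_def by auto
  ultimately have "iso L C A2"
    using emb CK A2 BC B2 unfolding computable_embedding_def by blast
  then show "iso L A1 A2" using iso_trans C(2) by blast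
qed

end
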